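(* Let $A$ be any of $L_d$, $C_d$ ($d\in\{2,3,\dots\}$), or $L_\infty$, and let $p\in[1,\infty)\setminus\{2\}$. Then there exists an injective free spatial representation of $A$ on $l^p(\mathbb{Z}_{>0})$.
   Context: $L_d$ is the universal complex unital algebra generated by $s_1,\dots,s_d,t_1,\dots,t_d$ with $t_js_j=1$, $t_js_k=0$ ($j\ne k$), $\sum_js_jt_j=1$; $C_d$ has the same generators with only $t_js_j=1$, $t_js_k=0$ ($j\ne k$); $L_\infty$ is on $s_1,s_2,\dots,t_1,t_2,\dots$ with $t_js_j=1$, $t_js_k=0$ ($j\ne k$). A representation is a unital algebra homomorphism into $L(E)$. A representation $\rho$ on $L^p(X,\mu)$ is free if there is a measurable partition $X=\coprod_{m\in\mathbb{Z}}E_m$ with $\rho(s_j)(L^p(E_m,\mu))\subset L^p(E_{m+1},\mu)$ and $\rho(t_j)(L^p(E_m,\mu))\subset L^p(E_{m-1},\mu)$ for all $m$ and $j$ (here $L^p(E,\mu)$ is the subspace of functions vanishing off $E$). $\rho$ is spatial if each $\rho(s_j)$, $\rho(t_j)$ is a spatial partial isometry with $\rho(t_j)$ the reverse of $\rho(s_j)$. Spatial partial isometries: Let $(X,\mathcal{B},\mu)$, $(Y,\mathcal{C},\nu)$ be $\sigma$-finite measure spaces, $\mathcal{N}(\mu)$ the $\mu$-null sets, $\mathcal{B}/\mathcal{N}(\mu)$ the Boolean $\sigma$-algebra of measurable sets modulo null sets. A measurable set transformation is a map $S\colon\mathcal{B}/\mathcal{N}(\mu)\to\mathcal{C}/\mathcal{N}(\nu)$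 which is a Boolean algebra homomorphism preserving countable unions; it induces a unique linear map $S_*$ on measurable functions mod a.e. equality with $S_*(\chi_E)=\chi_{S(E)}$ preserving a.e. limits of sequences; for bijective $S$, $S_*(\mu)(F)=\mu(E)$ when $S([E])=[F]$. A spatial system is $(E,F,S,g)$ with $E\in\mathcal{B}$, $F\in\mathcal{C}$, $S$ a bijective measurable set transformation from $(E,\mu|_E)$ to $(F,\nu|_F)$, $g$ measurable on $F$ with $|g|=1$ a.e.; the associated spatial partial isometry is $(s\xi)(y)=g(y)[\tfrac{dS_*(\mu|_E)}{d\nu|_F}(y)]^{1/p}S_*(\xi|_E)(y)$ on $F$ and $0$ off $F$; its reverse has spatial system $(F,E,S^{-1},(S^{-1})_*(g)^{-1})$. *)

theory Defs
  imports Complex_Main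
begin

text \<open>We index Z_{>0} by nat via n |-> n+1. A vector is a function nat => complex;
  l^p is the set of p-summable ones (counting measure).\<close>

definition lp :: "real \<Rightarrow> (nat \<Rightarrow> complex) set" where
  "lp p = {\<xi>. summable (\<lambda>n. norm (\<xi> n) powr p)}"

definition lp_norm :: "real \<Rightarrow> (nat \<Rightarrow> complex) \<Rightarrow> real" where
  "lp_norm p \<xi> = (\<Sum>n. norm (\<xi> n) powr p) powr (1 / p)"

type_synonym op = "(nat \<Rightarrow> complex) \<Rightarrow> (nat \<Rightarrow> complex)"

text \<open>Bounded linear operators on l^p (only their behaviour on l^p matters).\<close>
definition bounded_op :: "real \<Rightarrow> op \<Rightarrow> bool" where
  "bounded_op p A \<longleftrightarrow>
     (\<forall>\<xi>\<in>lp p. A \<xi> \<in> lp p) \<and>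
     (\<forall>\<xi>\<in>lp p. \<forall>\<eta>\<in>lp p. \<forall>c::complex.
         A (\<lambda>n. c * \<xi> n + \<eta> n) = (\<lambda>n. c * A \<xi> n + A \<eta> n)) \<and>
     (\<exists>C. \<forall>\<xi>\<in>lp p. lp_norm p (A \<xi>) \<le> C * lp_norm p \<xi>)"

datatype gen = S nat | T nat

datatype alg = Ld nat | Cd nat | Linf

fun idx :: "alg \<Rightarrow> nat set" where
  "idx (Ld d) = {1..d}"
| "idx (Cd d) = {1..d}"
| "idx Linf = {1..}"

definition gens :: "alg \<Rightarrow> gen set" where
  "gens A = S ` idx A \<union> T ` idx A"

text \<open>Noncommutative polynomials in the free unital algebra: finitely supported
  coefficient functions on words.\<close>
type_synonym ncpoly = "gen list \<Rightarrow> complex"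

definition ncpoly_over :: "gen set \<Rightarrow> ncpoly \<Rightarrow> bool" where
  "ncpoly_over G P \<longleftrightarrow> finite {w. P w \<noteq> 0} \<and> (\<forall>w. P w \<noteq> 0 \<longrightarrow> set w \<subseteq> G)"

definition mono :: "complex \<Rightarrow> gen list \<Rightarrow> ncpoly" where
  "mono c w = (\<lambda>u. if u = w then c else 0)"

definition ncmult :: "ncpoly \<Rightarrow> ncpoly \<Rightarrow> ncpoly" where
  "ncmult P Q = (\<lambda>w. \<Sum>i\<in>{0..length w}. P (take i w) * Q (drop i w))"

text \<open>Defining relations of each algebra, as polynomials required to vanish.\<close>
definition rels :: "alg \<Rightarrow> ncpoly set" where
  "rels A =
     {(\<lambda>u. mono 1 [T j, S j] u - mono 1 [] u) | j. j \<in> idx A} \<union>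
     {mono 1 [T j, S k] | j k. j \<in> idx A \<and> k \<in> idx A \<and> j \<noteq> k} \<union>
     (case A of Ld d \<Rightarrow>
        {(\<lambda>u. (\<Sum>j\<in>{1..d}. mono 1 [S j, T j] u) - mono 1 [] u)}
      | _ \<Rightarrow> {})"

inductive_set ideal_gen :: "gen set \<Rightarrow> ncpoly set \<Rightarrow> ncpoly set" for G R where
  zero: "(\<lambda>_. 0) \<in> ideal_gen G R"
| base: "r \<in> R \<Longrightarrow> r \<in> ideal_gen G R"
| add: "P \<in> ideal_gen G R \<Longrightarrow> Q \<in> ideal_gen G R \<Longrightarrow> (\<lambda>w. P w + Q w) \<in> ideal_gen G R"
| lmult: "P \<in> ideal_gen G R \<Longrightarrow> set w \<subseteq> G \<Longrightarrow> ncmult (mono c w) P \<in> ideal_gen G R"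
| rmult: "P \<in> ideal_gen G R \<Longrightarrow> set w \<subseteq> G \<Longrightarrow> ncmult P (mono 1 w) \<in> ideal_gen G R"

text \<open>A representation is given by the images of the generators; the induced
  unital homomorphism evaluates noncommutative polynomials.\<close>
definition word_op :: "(gen \<Rightarrow> op) \<Rightarrow> gen list \<Rightarrow> op" where
  "word_op \<rho> w = foldr (\<lambda>g f. \<rho> g \<circ> f) w id"

definition nc_eval :: "(gen \<Rightarrow> op) \<Rightarrow> ncpoly \<Rightarrow> op" where
  "nc_eval \<rho> P = (\<lambda>\<xi> n. \<Sum>w\<in>{w. P w \<noteq> 0}. P w * word_op \<rho> w \<xi> n)"

definition is_rep :: "real \<Rightarrow> alg \<Rightarrow> (gen \<Rightarrow> op) \<Rightarrow> bool" where
  "is_rep p A \<rho> \<longleftrightarrow> (\<forall>g\<in>gens A. bounded_op p (\<rho> g)) \<and>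
     (\<forall>r\<in>rels A. \<forall>\<xi>\<in>lp p. nc_eval \<rho> r \<xi> = (\<lambda>_. 0))"

text \<open>Injectivity of the induced homomorphism A -> L(l^p): the kernel of the
  evaluation on the free algebra is exactly the ideal of relations.\<close>
definition injective_rep :: "real \<Rightarrow> alg \<Rightarrow> (gen \<Rightarrow> op) \<Rightarrow> bool" where
  "injective_rep p A \<rho> \<longleftrightarrow> (\<forall>P. ncpoly_over (gens A) P \<longrightarrow>
      (\<forall>\<xi>\<in>lp p. nc_eval \<rho> P \<xi> = (\<lambda>_. 0)) \<longrightarrow> P \<in> ideal_gen (gens A) (rels A))"

text \<open>Free: a partition of the index set into E_m (m \<in> Z), shifted by s_j and t_j.
  All subsets are measurable for counting measure.\<close>
definition free_rep :: "real \<Rightarrow> alg \<Rightarrow> (gen \<Rightarrow> op) \<Rightarrow> bool" where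
  "free_rep p A \<rho> \<longleftrightarrow> (\<exists>E :: int \<Rightarrow> nat set.
     (\<forall>m m'. m \<noteq> m' \<longrightarrow> E m \<inter> E m' = {}) \<and> (\<Union>m. E m) = UNIV \<and>
     (\<forall>j\<in>idx A. \<forall>m. \<forall>\<xi>\<in>lp p. (\<forall>x. x \<notin> E m \<longrightarrow> \<xi> x = 0) \<longrightarrow>
        (\<forall>x. x \<notin> E (m + 1) \<longrightarrow> \<rho> (S j) \<xi> x = 0) \<and>
        (\<forall>x. x \<notin> E (m - 1) \<longrightarrow> \<rho> (T j) \<xi> x = 0)))"

text \<open>For counting measure on nat, the only null set is empty, so B/N(mu) is the
  power set. A bijective measurable set transformation from E to F is a bijective
  Boolean sigma-homomorphism Pow E -> Pow F.\<close>
definition set_transf_bij :: "nat set \<Rightarrow> nat set \<Rightarrow> (nat set \<Rightarrow> nat set) \<Rightarrow> bool" where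
  "set_transf_bij E F St \<longleftrightarrow>
     bij_betw St (Pow E) (Pow F) \<and>
     (\<forall>A\<subseteq>E. St (E - A) = F - St A) \<and>
     (\<forall>A B. A \<subseteq> E \<longrightarrow> B \<subseteq> E \<longrightarrow> St (A \<inter> B) = St A \<inter> St B) \<and>
     (\<forall>Af :: nat \<Rightarrow> nat set. (\<forall>n. Af n \<subseteq> E) \<longrightarrow> St (\<Union>n. Af n) = (\<Union>n. St (Af n)))"

text \<open>The induced map St_* on functions: it sends chi_{x} to chi_{St {x}}, so
  (St_* f)(y) = f(x) where St {x} = {y}.\<close>
definition pushfwd :: "nat set \<Rightarrow> (nat set \<Rightarrow> nat set) \<Rightarrow> (nat \<Rightarrow> 'a) \<Rightarrow> nat \<Rightarrow> 'a" where
  "pushfwd E St f y = f (THE x. x \<in> E \<and> St {x} = {y})"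

text \<open>Radon-Nikodym derivative of St_*(mu|E) w.r.t. counting measure on F at y:
  St_*(mu)({y}) = mu(St^{-1}{y}).\<close>
definition rn_deriv :: "nat set \<Rightarrow> (nat set \<Rightarrow> nat set) \<Rightarrow> nat \<Rightarrow> real" where
  "rn_deriv E St y = real (card (inv_into (Pow E) St {y}))"

definition spatial_pi :: "real \<Rightarrow> nat set \<Rightarrow> nat set \<Rightarrow> (nat set \<Rightarrow> nat set) \<Rightarrow>
    (nat \<Rightarrow> complex) \<Rightarrow> op" where
  "spatial_pi p E F St g \<xi> y =
     (if y \<in> F then g y * complex_of_real (rn_deriv E St y powr (1 / p)) *
        pushfwd E St (\<lambda>x. if x \<in> E then \<xi> x else 0) y
      else 0)"

definition spatial_system :: "nat set \<Rightarrow> nat set \<Rightarrow> (nat set \<Rightarrow> nat set) \<Rightarrow>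
    (nat \<Rightarrow> complex) \<Rightarrow> bool" where
  "spatial_system E F St g \<longleftrightarrow> set_transf_bij E F St \<and> (\<forall>y\<in>F. norm (g y) = 1)"

text \<open>s is spatial with system (E,F,St,g) and t is its reverse, whose system is
  (F, E, St^{-1}, ((St^{-1})_* g)^{-1}); equalities are as operators on l^p.\<close>
definition spatial_pair :: "real \<Rightarrow> op \<Rightarrow> op \<Rightarrow> bool" where
  "spatial_pair p s t \<longleftrightarrow> (\<exists>E F St g. spatial_system E F St g \<and>
     (\<forall>\<xi>\<in>lp p. s \<xi> = spatial_pi p E F St g \<xi>) \<and>
     (\<forall>\<xi>\<in>lp p. t \<xi> = spatial_pi p F E (inv_into (Pow E) St)
         (\<lambda>x. inverse (pushfwd F (inv_into (Pow E) St) g x)) \<xi>))"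

definition spatial_rep :: "real \<Rightarrow> alg \<Rightarrow> (gen \<Rightarrow> op) \<Rightarrow> bool" where
  "spatial_rep p A \<rho> \<longleftrightarrow> (\<forall>j\<in>idx A. spatial_pair p (\<rho> (S j)) (\<rho> (T j)))"

definition valid_alg :: "alg \<Rightarrow> bool" where
  "valid_alg A \<longleftrightarrow> (case A of Ld d \<Rightarrow> d \<ge> 2 | Cd d \<Rightarrow> d \<ge> 2 | Linf \<Rightarrow> True)"

end

theory Submission
  imports Defs "HOL-Library.Nat_Bijection"
begin


definition supp :: "ncpoly \<Rightarrow> gen list set" where "supp P = {w. P w \<noteq> 0}"

lemma ncmult_mono_left:
  "ncmult (mono c w) P v = (if take (length w) v = w then c * P (drop (length w) v) else 0)"
proof -
  define f where "f i = mono c w (take i v) * P (drop i v)" for i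
  have z: "f i = 0" if "i \<noteq> length w" "i \<le> length v" for i
  proof -
    have "take i v \<noteq> w"
    proof
      assume "take i v = w"
      then have "length w = i" using that(2) by (metis length_take min.absorb2)
      then show False using that(1) by simp
    qed
    then show ?thesis unfolding f_def mono_def by simp
  qed
  have "ncmult (mono c w) P v = sum f {0..length v}" unfolding ncmult_def f_def by simp
  also have "\<dots> = (if take (length w) v = w then c * P (drop (length w) v) else 0)"
  proof (cases "length w \<le> length v")
    case True
    have "sum f {0..length v} = f (length w)"
      using sum.mono_neutral_right[of "{0..length v}" "{length w}" f] True z by auto
    then show ?thesis unfolding f_def mono_def by simp
  next
    case False
    then have "take (length w) v \<noteq> w" by auto
    moreover have "sum f {0..length v} = 0" by (rule sum.neutral) (use False z in auto)
    ultimately show ?thesis by simp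
  qed
  finally show ?thesis .
qed

lemma ncmult_mono_mono: "ncmult (mono a u) (mono b v) = mono (a*b) (u@v)"
proof (rule ext)
  fix x
  show "ncmult (mono a u) (mono b v) x = mono (a*b) (u@v) x"
  proof (cases "x = u @ v")
    case True
    then show ?thesis unfolding ncmult_mono_left by (simp add: mono_def)
  next
    case False
    have "\<not> (take (length u) x = u \<and> drop (length u) x = v)"
      using False append_take_drop_id[of "length u" x] by metis
    then show ?thesis using False unfolding ncmult_mono_left by (auto simp add: mono_def)
  qed
qed

lemma ncmult_mono_nil: "ncmult (mono c []) P = (\<lambda>v. c * P v)"
  by (rule ext) (simp add: ncmult_mono_left)

lemma ncmult_diff_left: "ncmult (\<lambda>v. P v - Q v) R = (\<lambda>w. ncmult P R w - ncmult Q R w)"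
  by (rule ext) (simp add: ncmult_def left_diff_distrib sum_subtractf)

lemma ncmult_diff_right: "ncmult R (\<lambda>v. P v - Q v) = (\<lambda>w. ncmult R P w - ncmult R Q w)"
  by (rule ext) (simp add: ncmult_def right_diff_distrib sum_subtractf)

lemma ncmult_sum_left: "ncmult (\<lambda>v. \<Sum>j\<in>F. P j v) R = (\<lambda>w. \<Sum>j\<in>F. ncmult (P j) R w)"
  by (rule ext) (simp add: ncmult_def sum_distrib_right sum.swap[of _ F])

lemma ncmult_sum_right: "ncmult R (\<lambda>v. \<Sum>j\<in>F. P j v) = (\<lambda>w. \<Sum>j\<in>F. ncmult R (P j) w)"
  by (rule ext) (simp add: ncmult_def sum_distrib_left sum.swap[of _ F])

lemma I_smult: "P \<in> ideal_gen G R \<Longrightarrow> (\<lambda>v. c * P v) \<in> ideal_gen G R"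
  using ideal_gen.lmult[of P G R "[]" c] by (simp add: ncmult_mono_nil)

lemma I_diff: "P \<in> ideal_gen G R \<Longrightarrow> Q \<in> ideal_gen G R \<Longrightarrow> (\<lambda>v. P v - Q v) \<in> ideal_gen G R"
  using ideal_gen.add[OF _ I_smult[of Q G R "-1"], of P] by simp

lemma I_sum: "finite F \<Longrightarrow> (\<And>j. j \<in> F \<Longrightarrow> P j \<in> ideal_gen G R) \<Longrightarrow>
   (\<lambda>v. \<Sum>j\<in>F. c j * P j v) \<in> ideal_gen G R"
proof (induction F rule: finite_induct)
  case empty
  then show ?case using ideal_gen.zero by simp
next
  case (insert x F)
  have "(\<lambda>v. c x * P x v + (\<Sum>j\<in>F. c j * P j v)) \<in> ideal_gen G R"
    using insert by (intro ideal_gen.add I_smult) auto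
  then show ?case using insert by simp
qed

lemma I_sandwich: "r \<in> R \<Longrightarrow> set u \<subseteq> G \<Longrightarrow> set v \<subseteq> G \<Longrightarrow>
   ncmult (mono 1 u) (ncmult r (mono 1 v)) \<in> ideal_gen G R"
  by (intro ideal_gen.lmult ideal_gen.rmult ideal_gen.base)

lemma S_in_gens[simp]: "S j \<in> gens A \<longleftrightarrow> j \<in> idx A"
  and T_in_gens[simp]: "T j \<in> gens A \<longleftrightarrow> j \<in> idx A"
  by (auto simp: gens_def)

abbreviation II where "II A \<equiv> ideal_gen (gens A) (rels A)"

lemma rel1: "j \<in> idx A \<Longrightarrow> set u \<subseteq> gens A \<Longrightarrow> set v \<subseteq> gens A \<Longrightarrow>
  (\<lambda>x. mono 1 (u @ [T j, S j] @ v) x - mono 1 (u @ v) x) \<in> II A"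
proof -
  assume a: "j \<in> idx A" "set u \<subseteq> gens A" "set v \<subseteq> gens A"
  have r: "(\<lambda>x. mono 1 [T j, S j] x - mono 1 [] x) \<in> rels A"
    using a unfolding rels_def by blast
  show ?thesis using I_sandwich[OF r a(2,3)]
    by (simp add: ncmult_diff_left ncmult_diff_right ncmult_mono_mono)
qed

lemma rel2: "j \<in> idx A \<Longrightarrow> k \<in> idx A \<Longrightarrow> j \<noteq> k \<Longrightarrow> set u \<subseteq> gens A \<Longrightarrow> set v \<subseteq> gens A \<Longrightarrow>
  mono 1 (u @ [T j, S k] @ v) \<in> II A"
proof -
  assume a: "j \<in> idx A" "k \<in> idx A" "j \<noteq> k" "set u \<subseteq> gens A" "set v \<subseteq> gens A"
  have r: "mono 1 [T j, S k] \<in> rels A"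
    using a unfolding rels_def by blast
  show ?thesis using I_sandwich[OF r a(4,5)]
    by (simp add: ncmult_mono_mono)
qed

lemma rel3: "set u \<subseteq> gens (Ld d) \<Longrightarrow> set v \<subseteq> gens (Ld d) \<Longrightarrow>
  (\<lambda>x. (\<Sum>j\<in>{1..d}. mono 1 (u @ [S j, T j] @ v) x) - mono 1 (u @ v) x) \<in> II (Ld d)"
proof -
  assume a: "set u \<subseteq> gens (Ld d)" "set v \<subseteq> gens (Ld d)"
  have r: "(\<lambda>x. (\<Sum>j\<in>{1..d}. mono 1 [S j, T j] x) - mono 1 [] x) \<in> rels (Ld d)"
    unfolding rels_def by simp
  show ?thesis using I_sandwich[OF r a]
    by (simp add: ncmult_diff_left ncmult_diff_right ncmult_mono_mono ncmult_sum_left ncmult_sum_right)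
qed


definition basisA :: "alg \<Rightarrow> nat list \<Rightarrow> nat list \<Rightarrow> bool" where
  "basisA A \<mu> \<nu> \<longleftrightarrow> (case A of Ld d \<Rightarrow> \<not> (\<mu> \<noteq> [] \<and> \<nu> \<noteq> [] \<and> last \<mu> = 1 \<and> last \<nu> = 1) | _ \<Rightarrow> True)"

definition basisw :: "alg \<Rightarrow> gen list \<Rightarrow> bool" where
  "basisw A v \<longleftrightarrow> (\<exists>\<mu> \<nu>. v = map S \<mu> @ map T (rev \<nu>) \<and> set \<mu> \<subseteq> idx A \<and> set \<nu> \<subseteq> idx A \<and> basisA A \<mu> \<nu>)"

lemma noTS: "\<not> (\<exists>u v j k. w = u @ [T j, S k] @ v) \<Longrightarrow> \<exists>\<mu> \<nu>. w = map S \<mu> @ map T \<nu>"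
proof (induction w)
  case Nil
  then show ?case by (rule_tac x="[]" in exI, rule_tac x="[]" in exI) simp
next
  case (Cons g w)
  have "\<not> (\<exists>u v j k. w = u @ [T j, S k] @ v)"
  proof
    assume "\<exists>u v j k. w = u @ [T j, S k] @ v"
    then obtain u v j k where "w = u @ [T j, S k] @ v" by blast
    then have "g # w = (g # u) @ [T j, S k] @ v" by simp
    then show False using Cons.prems by blast
  qed
  then obtain \<mu> \<nu> where w: "w = map S \<mu> @ map T \<nu>" using Cons.IH by blast
  show ?case
  proof (cases g)
    case (S j)
    then have "g # w = map S (j # \<mu>) @ map T \<nu>" using w by simp
    then show ?thesis by blast
  next
    case (T j)
    show ?thesis
    proof (cases \<mu>)
      case Nil
      then have "g # w = map S [] @ map T (j # \<nu>)" using w T by simp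
      then show ?thesis by blast
    next
      case (Cons m \<mu>')
      then have "g # w = [] @ [T j, S m] @ (map S \<mu>' @ map T \<nu>)" using w T by simp
      then show ?thesis using Cons.prems by blast
    qed
  qed
qed

lemma supp_mono: "supp (mono 1 w) = {w}"
  by (auto simp: supp_def mono_def)

lemma nf: "set w \<subseteq> gens A \<Longrightarrow> \<exists>Q. finite (supp Q) \<and> (\<forall>v\<in>supp Q. basisw A v) \<and>
   (\<lambda>v. mono 1 w v - Q v) \<in> II A"
proof (induction "length w" arbitrary: w rule: less_induct)
  case less
  show ?case
  proof (cases "\<exists>u v j k. w = u @ [T j, S k] @ v")
    case True
    then obtain u v j k where w: "w = u @ [T j, S k] @ v" by blast
    have su: "set u \<subseteq> gens A" and sv: "set v \<subseteq> gens A" and jk: "j \<in> idx A" "k \<in> idx A"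
      using less.prems w by auto
    show ?thesis
    proof (cases "j = k")
      case True
      have "length (u @ v) < length w" "set (u @ v) \<subseteq> gens A" using w su sv by auto
      then obtain Q where Q: "finite (supp Q)" "\<forall>v\<in>supp Q. basisw A v"
        "(\<lambda>x. mono 1 (u @ v) x - Q x) \<in> II A" using less.hyps by blast
      have "(\<lambda>x. (mono 1 (u @ [T j, S j] @ v) x - mono 1 (u @ v) x) + (mono 1 (u @ v) x - Q x)) \<in> II A"
        by (rule ideal_gen.add[OF rel1[OF jk(1) su sv] Q(3)])
      then have "(\<lambda>x. mono 1 w x - Q x) \<in> II A" using w True by simp
      then show ?thesis using Q by blast
    next
      case False
      have "mono 1 w \<in> II A" using rel2[OF jk False su sv] w by simp
      moreover have "supp (\<lambda>_. 0) = {}" by (simp add: supp_def)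
      ultimately show ?thesis by (rule_tac x="\<lambda>_. 0" in exI) simp
    qed
  next
    case False
    then obtain \<mu> \<nu> where w: "w = map S \<mu> @ map T \<nu>" using noTS by blast
    have sm: "set \<mu> \<subseteq> idx A" and sn: "set \<nu> \<subseteq> idx A" using less.prems w by auto
    show ?thesis
    proof (cases "basisA A \<mu> (rev \<nu>)")
      case True
      have "basisw A w" unfolding basisw_def using w sm sn True
        by (rule_tac x=\<mu> in exI, rule_tac x="rev \<nu>" in exI) simp
      moreover have "(\<lambda>v. mono 1 w v - mono 1 w v) \<in> II A" using ideal_gen.zero by simp
      ultimately show ?thesis by (rule_tac x="mono 1 w" in exI) (simp add: supp_mono)
    next
      case False
      then obtain d where A: "A = Ld d" and ne: "\<mu> \<noteq> []" "\<nu> \<noteq> []" and l: "last \<mu> = 1" "hd \<nu> = 1"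
        unfolding basisA_def by (cases A) (auto simp: last_rev)
      obtain \<mu>1 where m1: "\<mu> = \<mu>1 @ [1]" using ne(1) l(1) by (metis append_butlast_last_id)
      obtain \<nu>1 where n1: "\<nu> = 1 # \<nu>1" using ne(2) l(2) by (metis list.collapse)
      define u where "u = map S \<mu>1"
      define v where "v = map T \<nu>1"
      have w2: "w = u @ [S 1, T 1] @ v" using w m1 n1 u_def v_def by simp
      have su: "set u \<subseteq> gens A" and sv: "set v \<subseteq> gens A" using less.prems w2 by auto
      have d1: "1 \<le> d" using sm m1 A by auto
      have "length (u @ v) < length w" "set (u @ v) \<subseteq> gens A" using w2 su sv by auto
      then obtain Q where Q: "finite (supp Q)" "\<forall>v\<in>supp Q. basisw A v"
        "(\<lambda>x. mono 1 (u @ v) x - Q x) \<in> II A" using less.hyps by blast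
      define Q2 where "Q2 x = Q x - (\<Sum>j\<in>{2..d}. mono 1 (u @ [S j, T j] @ v) x)" for x
      have "(\<lambda>x. ((\<Sum>j\<in>{1..d}. mono 1 (u @ [S j, T j] @ v) x) - mono 1 (u @ v) x) + (mono 1 (u @ v) x - Q x)) \<in> II A"
        using ideal_gen.add[OF rel3[OF su[unfolded A] sv[unfolded A]] Q(3)[unfolded A]] A by simp
      moreover have "\<And>x. (\<Sum>j\<in>{1..d}. mono 1 (u @ [S j, T j] @ v) x) = mono 1 w x + (\<Sum>j\<in>{2..d}. mono 1 (u @ [S j, T j] @ v) x)"
        using d1 w2 by (simp add: sum.atLeast_Suc_atMost numeral_2_eq_2)
      ultimately have I: "(\<lambda>x. mono 1 w x - Q2 x) \<in> II A"
        unfolding Q2_def by (simp add: algebra_simps)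
      have sub: "supp Q2 \<subseteq> supp Q \<union> (\<lambda>j. u @ [S j, T j] @ v) ` {2..d}"
      proof
        fix x assume x: "x \<in> supp Q2"
        show "x \<in> supp Q \<union> (\<lambda>j. u @ [S j, T j] @ v) ` {2..d}"
        proof (rule ccontr)
          assume "x \<notin> supp Q \<union> (\<lambda>j. u @ [S j, T j] @ v) ` {2..d}"
          then have "Q x = 0" "\<And>j. j \<in> {2..d} \<Longrightarrow> mono 1 (u @ [S j, T j] @ v) x = 0"
            by (auto simp: supp_def mono_def)
          then have "Q2 x = 0" unfolding Q2_def by simp
          then show False using x by (simp add: supp_def)
        qed
      qed
      have fin: "finite (supp Q2)" using Q(1) finite_subset[OF sub] by blast
      have bas: "\<forall>x\<in>supp Q2. basisw A x"
      proof
        fix x assume "x \<in> supp Q2"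
        then have "x \<in> supp Q \<or> (\<exists>j\<in>{2..d}. x = u @ [S j, T j] @ v)" using sub by blast
        then show "basisw A x"
        proof
          assume "x \<in> supp Q" then show ?thesis using Q(2) by blast
        next
          assume "\<exists>j\<in>{2..d}. x = u @ [S j, T j] @ v"
          then obtain j where j: "j \<in> {2..d}" "x = u @ [S j, T j] @ v" by blast
          have "x = map S (\<mu>1 @ [j]) @ map T (rev (rev \<nu>1 @ [j]))"
            using j u_def v_def by simp
          moreover have "set (\<mu>1 @ [j]) \<subseteq> idx A" "set (rev \<nu>1 @ [j]) \<subseteq> idx A"
            using j sm sn m1 n1 A by auto
          moreover have "basisA A (\<mu>1 @ [j]) (rev \<nu>1 @ [j])" using j A unfolding basisA_def by simp
          ultimately show ?thesis unfolding basisw_def by blast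
        qed
      qed
      show ?thesis using fin bas I by blast
    qed
  qed
qed


lemma nf_poly: assumes P: "ncpoly_over (gens A) P"
  shows "\<exists>Q. finite (supp Q) \<and> (\<forall>v\<in>supp Q. basisw A v) \<and> (\<lambda>v. P v - Q v) \<in> II A"
proof -
  have fin: "finite (supp P)" using P by (simp add: ncpoly_over_def supp_def)
  have "\<forall>w\<in>supp P. \<exists>Q. finite (supp Q) \<and> (\<forall>v\<in>supp Q. basisw A v) \<and> (\<lambda>v. mono 1 w v - Q v) \<in> II A"
    using P nf by (simp add: ncpoly_over_def supp_def)
  then obtain QQ where QQ: "\<And>w. w \<in> supp P \<Longrightarrow> finite (supp (QQ w)) \<and> (\<forall>v\<in>supp (QQ w). basisw A v) \<and>
      (\<lambda>v. mono 1 w v - QQ w v) \<in> II A" by metis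
  define Q where "Q v = (\<Sum>w\<in>supp P. P w * QQ w v)" for v
  have sub: "supp Q \<subseteq> (\<Union>w\<in>supp P. supp (QQ w))"
  proof
    fix v assume v: "v \<in> supp Q"
    show "v \<in> (\<Union>w\<in>supp P. supp (QQ w))"
    proof (rule ccontr)
      assume "v \<notin> (\<Union>w\<in>supp P. supp (QQ w))"
      then have "Q v = 0" unfolding Q_def by (auto simp: supp_def intro!: sum.neutral)
      then show False using v by (simp add: supp_def)
    qed
  qed
  have "finite (supp Q)" using fin QQ finite_subset[OF sub] by blast
  moreover have "\<forall>v\<in>supp Q. basisw A v" using sub QQ by blast
  moreover have "(\<lambda>v. P v - Q v) \<in> II A"
  proof -
    have "(\<lambda>v. \<Sum>w\<in>supp P. P w * (mono 1 w v - QQ w v)) \<in> II A"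
      using I_sum[OF fin, of "\<lambda>w v. mono 1 w v - QQ w v"] QQ by blast
    moreover have "(\<Sum>w\<in>supp P. P w * (mono 1 w v - QQ w v)) = P v - Q v" for v
    proof -
      have "(\<Sum>w\<in>supp P. P w * mono 1 w v) = P v"
      proof -
        have "(\<Sum>w\<in>supp P. P w * mono 1 w v) = (\<Sum>w\<in>supp P. if w = v then P w else 0)"
          by (rule sum.cong) (auto simp: mono_def)
        also have "\<dots> = P v" using fin by (simp add: supp_def)
        finally show ?thesis .
      qed
      then show ?thesis unfolding Q_def by (simp add: right_diff_distrib sum_subtractf)
    qed
    ultimately show ?thesis by simp
  qed
  ultimately show ?thesis by blast
qed




primrec sw :: "(nat \<Rightarrow> nat \<Rightarrow> nat) \<Rightarrow> nat list \<Rightarrow> nat \<Rightarrow> nat" where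
  "sw sig [] x = x"
| "sw sig (j # \<gamma>) x = sig j (sw sig \<gamma> x)"

lemma sw_append: "sw sig (a @ b) x = sw sig a (sw sig b x)"
  by (induction a) auto

fun rho :: "(nat \<Rightarrow> nat \<Rightarrow> nat) \<Rightarrow> gen \<Rightarrow> op" where
  "rho sig (S j) \<xi> x = (if x \<in> range (sig j) then \<xi> (inv (sig j) x) else 0)"
| "rho sig (T j) \<xi> x = \<xi> (sig j x)"

lemma foldr_comp: "foldr (\<lambda>g f. \<rho> g \<circ> f) a h = foldr (\<lambda>g f. \<rho> g \<circ> f) a id \<circ> h"
  by (induction a) auto

lemma word_op_append: "word_op \<rho> (a @ b) \<xi> = word_op \<rho> a (word_op \<rho> b \<xi>)"
proof -
  have "word_op \<rho> (a @ b) = foldr (\<lambda>g f. \<rho> g \<circ> f) a (word_op \<rho> b)"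
    unfolding word_op_def by simp
  also have "\<dots> = word_op \<rho> a \<circ> word_op \<rho> b"
    unfolding word_op_def by (rule foldr_comp)
  finally show ?thesis by simp
qed

lemma word_op_Cons: "word_op \<rho> (g # w) \<xi> = \<rho> g (word_op \<rho> w \<xi>)"
  unfolding word_op_def by simp

lemma word_op_Nil[simp]: "word_op \<rho> [] \<xi> = \<xi>"
  unfolding word_op_def by simp

lemma eval_superset: "finite W \<Longrightarrow> supp P \<subseteq> W \<Longrightarrow>
   nc_eval \<rho> P \<xi> x = (\<Sum>w\<in>W. P w * word_op \<rho> w \<xi> x)"
  unfolding nc_eval_def supp_def
  by (rule sum.mono_neutral_left) auto

lemma rho_lin: "rho sig g (\<lambda>n. \<Sum>u\<in>U. c u * f u n) x = (\<Sum>u\<in>U. c u * rho sig g (f u) x)"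
  by (cases g) auto

lemma word_op_lin: "word_op (rho sig) w (\<lambda>n. \<Sum>u\<in>U. c u * f u n) x = (\<Sum>u\<in>U. c u * word_op (rho sig) w (f u) x)"
proof (induction w arbitrary: x)
  case Nil
  then show ?case by simp
next
  case (Cons g w)
  have e: "word_op (rho sig) w (\<lambda>n. \<Sum>u\<in>U. c u * f u n) = (\<lambda>n. \<Sum>u\<in>U. c u * word_op (rho sig) w (f u) n)"
    by (rule ext) (rule Cons.IH)
  have "word_op (rho sig) (g # w) (\<lambda>n. \<Sum>u\<in>U. c u * f u n) x =
     rho sig g (\<lambda>n. \<Sum>u\<in>U. c u * word_op (rho sig) w (f u) n) x"
    by (simp only: word_op_Cons e)
  also have "\<dots> = (\<Sum>u\<in>U. c u * word_op (rho sig) (g # w) (f u) x)"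
    by (simp add: rho_lin word_op_Cons)
  finally show ?case .
qed

lemma rho_zero: "rho sig g (\<lambda>_. 0) = (\<lambda>_. 0)"
  by (cases g) (auto intro!: ext)

lemma word_op_zero: "word_op (rho sig) w (\<lambda>_. 0) = (\<lambda>_. 0)"
  by (induction w) (simp_all add: word_op_Cons rho_zero)

lemma ncmult_mono_right_app: "ncmult P (mono c w) (u @ w) = P u * c"
proof -
  define v where "v = u @ w"
  define f where "f i = P (take i v) * mono c w (drop i v)" for i
  have z: "f i = 0" if "i \<noteq> length u" "i \<le> length v" for i
  proof -
    have "drop i v \<noteq> w"
    proof
      assume "drop i v = w"
      then have "length w = length v - i" by (metis length_drop)
      then show False using that v_def by simp
    qed
    then show ?thesis unfolding f_def mono_def by simp
  qed
  have "ncmult P (mono c w) v = sum f {0..length v}" unfolding ncmult_def f_def by simp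
  also have "\<dots> = f (length u)"
    using sum.mono_neutral_right[of "{0..length v}" "{length u}" f] z v_def by auto
  also have "\<dots> = P u * c" unfolding f_def v_def mono_def by simp
  finally show ?thesis unfolding v_def .
qed

lemma ncmult_mono_right_nz: "ncmult P (mono c w) v \<noteq> 0 \<Longrightarrow> \<exists>u. v = u @ w"
proof -
  assume "ncmult P (mono c w) v \<noteq> 0"
  then obtain i where "P (take i v) * mono c w (drop i v) \<noteq> 0"
    unfolding ncmult_def by (meson sum.not_neutral_contains_not_neutral)
  then have "drop i v = w" by (auto simp: mono_def split: if_splits)
  then show ?thesis by (metis append_take_drop_id)
qed

lemma supp_lmult: "supp (ncmult (mono c w) P) \<subseteq> (\<lambda>u. w @ u) ` supp P"
proof
  fix v assume "v \<in> supp (ncmult (mono c w) P)"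
  then have "ncmult (mono c w) P v \<noteq> 0" by (simp add: supp_def)
  then have h: "take (length w) v = w \<and> P (drop (length w) v) \<noteq> 0"
    unfolding ncmult_mono_left by (cases "take (length w) v = w") simp_all
  then have "v = w @ drop (length w) v" by (metis append_take_drop_id)
  moreover have "drop (length w) v \<in> supp P" using h by (simp add: supp_def)
  ultimately show "v \<in> (\<lambda>u. w @ u) ` supp P" by (rule image_eqI)
qed

lemma supp_rmult: "supp (ncmult P (mono 1 w)) \<subseteq> (\<lambda>u. u @ w) ` supp P"
proof
  fix v assume v: "v \<in> supp (ncmult P (mono 1 w))"
  then obtain u where u: "v = u @ w" using ncmult_mono_right_nz unfolding supp_def by blast
  then have "P u \<noteq> 0" using v by (simp add: supp_def ncmult_mono_right_app)
  then show "v \<in> (\<lambda>u. u @ w) ` supp P" using u by (auto simp: supp_def)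
qed




definition ind :: "nat \<Rightarrow> nat \<Rightarrow> complex" where "ind y = (\<lambda>n. if n = y then 1 else 0)"

locale model =
  fixes A :: alg and sig :: "nat \<Rightarrow> nat \<Rightarrow> nat" and dep :: "nat \<Rightarrow> int"
  assumes sig_inj: "j \<in> idx A \<Longrightarrow> inj (sig j)"
  and sig_disj: "j \<in> idx A \<Longrightarrow> k \<in> idx A \<Longrightarrow> sig j x = sig k y \<Longrightarrow> j = k"
  and dep_sig: "j \<in> idx A \<Longrightarrow> dep (sig j x) = dep x + 1"
  and cover: "A = Ld d \<Longrightarrow> \<exists>j\<in>{1..d}. x \<in> range (sig j)"
  and tp: "\<exists>z. \<forall>\<gamma> z'. set \<gamma> \<subseteq> idx A \<longrightarrow> z = sw sig \<gamma> z' \<longrightarrow> \<gamma> \<noteq> [] \<longrightarrow>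
              (\<forall>\<mu> \<nu>. \<not> basisA A (\<mu> @ \<gamma>) (\<nu> @ \<gamma>))"
begin

abbreviation "\<rho> \<equiv> rho sig"

lemma inv_sig[simp]: "j \<in> idx A \<Longrightarrow> inv (sig j) (sig j x) = x"
  using sig_inj by (simp add: inv_f_f)

lemma sw_inj: "set \<mu> \<subseteq> idx A \<Longrightarrow> sw sig \<mu> x = sw sig \<mu> y \<Longrightarrow> x = y"
  by (induction \<mu>) (auto dest: injD[OF sig_inj])

lemma dep_sw: "set \<gamma> \<subseteq> idx A \<Longrightarrow> dep (sw sig \<gamma> u) = dep u + int (length \<gamma>)"
  by (induction \<gamma>) (auto simp: dep_sig)

lemma wT: "word_op \<rho> (map T \<nu>) \<xi> x = \<xi> (sw sig (rev \<nu>) x)"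
proof (induction \<nu> arbitrary: x)
  case Nil
  then show ?case by simp
next
  case (Cons j \<nu>)
  then show ?case by (simp add: word_op_Cons sw_append)
qed

lemma wS1: "set \<mu> \<subseteq> idx A \<Longrightarrow> word_op \<rho> (map S \<mu>) f (sw sig \<mu> z) = f z"
proof (induction \<mu>)
  case Nil
  then show ?case by simp
next
  case (Cons j \<mu>)
  then show ?case by (simp add: word_op_Cons)
qed

lemma wS0: "set \<mu> \<subseteq> idx A \<Longrightarrow> x \<notin> range (sw sig \<mu>) \<Longrightarrow> word_op \<rho> (map S \<mu>) f x = 0"
proof (induction \<mu> arbitrary: x)
  case Nil
  then show ?case by simp
next
  case (Cons j \<mu>)
  show ?case
  proof (cases "x \<in> range (sig j)")
    case True
    then obtain y where y: "x = sig j y" by blast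
    have "y \<notin> range (sw sig \<mu>)"
    proof
      assume "y \<in> range (sw sig \<mu>)"
      then obtain z where "y = sw sig \<mu> z" by blast
      then have "x = sw sig (j # \<mu>) z" using y by simp
      then show False using Cons.prems by blast
    qed
    then have "word_op \<rho> (map S \<mu>) f y = 0" using Cons by simp
    then show ?thesis using y Cons.prems by (simp add: word_op_Cons)
  next
    case False
    then show ?thesis by (simp add: word_op_Cons)
  qed
qed

lemma wB: "set \<mu> \<subseteq> idx A \<Longrightarrow> set \<nu> \<subseteq> idx A \<Longrightarrow>
  word_op \<rho> (map S \<mu> @ map T (rev \<nu>)) (ind y) x = (if \<exists>z. x = sw sig \<mu> z \<and> y = sw sig \<nu> z then 1 else 0)"
proof -
  assume sm: "set \<mu> \<subseteq> idx A" and sn: "set \<nu> \<subseteq> idx A"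
  have e: "word_op \<rho> (map T (rev \<nu>)) (ind y) = (\<lambda>n. ind y (sw sig \<nu> n))"
    by (rule ext) (simp add: wT)
  show ?thesis
  proof (cases "x \<in> range (sw sig \<mu>)")
    case True
    then obtain z where z: "x = sw sig \<mu> z" by blast
    have "(\<exists>z'. x = sw sig \<mu> z' \<and> y = sw sig \<nu> z') \<longleftrightarrow> y = sw sig \<nu> z"
      using z sw_inj[OF sm] by metis
    then show ?thesis using z sm by (simp add: word_op_append wS1 wT ind_def)
  next
    case False
    then show ?thesis using sm by (auto simp add: word_op_append wS0)
  qed
qed


lemma rels_cases: "r \<in> rels A \<Longrightarrow>
   (\<exists>j\<in>idx A. r = (\<lambda>u. mono 1 [T j, S j] u - mono 1 [] u)) \<or>
   (\<exists>j\<in>idx A. \<exists>k\<in>idx A. j \<noteq> k \<and> r = mono 1 [T j, S k]) \<or>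
   (\<exists>d. A = Ld d \<and> r = (\<lambda>u. (\<Sum>j\<in>{1..d}. mono 1 [S j, T j] u) - mono 1 [] u))"
proof -
  assume "r \<in> rels A"
  then consider "r \<in> {(\<lambda>u. mono 1 [T j, S j] u - mono 1 [] u) | j. j \<in> idx A}"
    | "r \<in> {mono 1 [T j, S k] | j k. j \<in> idx A \<and> k \<in> idx A \<and> j \<noteq> k}"
    | "r \<in> (case A of Ld d \<Rightarrow>
        {(\<lambda>u. (\<Sum>j\<in>{1..d}. mono 1 [S j, T j] u) - mono 1 [] u)} | _ \<Rightarrow> {})"
    unfolding rels_def by blast
  then show ?thesis
  proof cases
    case 1 then show ?thesis by blast
  next
    case 2 then show ?thesis by blast
  next
    case 3 then show ?thesis by (cases A) auto
  qed
qed

lemma wo2: "word_op \<rho> [g, h] \<xi> x = \<rho> g (\<rho> h \<xi>) x"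
  by (simp add: word_op_Cons)

lemma E1: assumes j: "j \<in> idx A"
  shows "finite (supp (\<lambda>u. mono 1 [T j, S j] u - mono 1 [] u)) \<and>
    nc_eval \<rho> (\<lambda>u. mono 1 [T j, S j] u - mono 1 [] u) \<xi> x = 0"
proof -
  let ?r = "\<lambda>u. mono 1 [T j, S j] u - mono 1 [] u"
  have sub: "supp ?r \<subseteq> {[T j, S j], []}" by (auto simp: supp_def mono_def)
  then have "finite (supp ?r)" by (rule finite_subset) simp
  moreover have "nc_eval \<rho> ?r \<xi> x = (\<Sum>w\<in>{[T j, S j], []}. ?r w * word_op \<rho> w \<xi> x)"
    by (rule eval_superset[OF _ sub]) simp
  moreover have "\<dots> = 0" using j by (simp add: mono_def wo2)
  ultimately show ?thesis by simp
qed

lemma E2: assumes j: "j \<in> idx A" "k \<in> idx A" "j \<noteq> k"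
  shows "finite (supp (mono 1 [T j, S k])) \<and> nc_eval \<rho> (mono 1 [T j, S k]) \<xi> x = 0"
proof -
  have "nc_eval \<rho> (mono 1 [T j, S k]) \<xi> x = (\<Sum>w\<in>{[T j, S k]}. mono 1 [T j, S k] w * word_op \<rho> w \<xi> x)"
    by (rule eval_superset) (simp_all add: supp_mono)
  moreover have "sig j x \<notin> range (sig k)" using sig_disj[OF j(1,2)] j(3) by auto
  ultimately have "nc_eval \<rho> (mono 1 [T j, S k]) \<xi> x = 0" by (simp add: mono_def wo2)
  then show ?thesis by (simp add: supp_mono)
qed

lemma E3: assumes A: "A = Ld d"
  shows "finite (supp (\<lambda>u. (\<Sum>j\<in>{1..d}. mono 1 [S j, T j] u) - mono 1 [] u)) \<and>
    nc_eval \<rho> (\<lambda>u. (\<Sum>j\<in>{1..d}. mono 1 [S j, T j] u) - mono 1 [] u) \<xi> x = 0"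
proof -
  let ?r = "\<lambda>u. (\<Sum>j\<in>{1..d}. mono 1 [S j, T j] u) - mono 1 [] u"
  let ?W = "insert [] ((\<lambda>j. [S j, T j]) ` {1..d})"
  have sub: "supp ?r \<subseteq> ?W"
  proof
    fix w assume w: "w \<in> supp ?r"
    show "w \<in> ?W"
    proof (rule ccontr)
      assume "w \<notin> ?W"
      then have "?r w = 0" by (auto simp: mono_def intro!: sum.neutral)
      then show False using w by (simp add: supp_def)
    qed
  qed
  have fin: "finite ?W" by simp
  have r1: "?r [S j, T j] = 1" if "j \<in> {1..d}" for j
  proof -
    have "(\<Sum>i\<in>{1..d}. mono 1 [S i, T i] [S j, T j]) = (\<Sum>i\<in>{1..d}. if i = j then 1 else 0)"
      by (rule sum.cong) (auto simp: mono_def)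
    then show ?thesis using that by (simp add: mono_def)
  qed
  have r0: "?r [] = -1" by (simp add: mono_def)
  obtain j0 where j0: "j0 \<in> {1..d}" "x \<in> range (sig j0)" using cover[OF A] by blast
  have wj: "word_op \<rho> [S j, T j] \<xi> x = (if j = j0 then \<xi> x else 0)" if "j \<in> {1..d}" for j
  proof (cases "j = j0")
    case True
    then show ?thesis using j0 by (auto simp: wo2 f_inv_into_f)
  next
    case False
    have "x \<notin> range (sig j)"
    proof
      assume "x \<in> range (sig j)"
      then obtain a where a: "x = sig j a" by blast
      obtain b where b: "x = sig j0 b" using j0 by blast
      have "j = j0" using sig_disj[of j j0 a b] a b that j0 A by simp
      then show False using False by simp
    qed
    then show ?thesis using False by (simp add: wo2)
  qed
  have "nc_eval \<rho> ?r \<xi> x = (\<Sum>w\<in>?W. ?r w * word_op \<rho> w \<xi> x)"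
    by (rule eval_superset[OF fin sub])
  also have "\<dots> = ?r [] * \<xi> x + (\<Sum>w\<in>(\<lambda>j. [S j, T j]) ` {1..d}. ?r w * word_op \<rho> w \<xi> x)"
    by (subst sum.insert) auto
  also have "(\<Sum>w\<in>(\<lambda>j. [S j, T j]) ` {1..d}. ?r w * word_op \<rho> w \<xi> x) =
      (\<Sum>j\<in>{1..d}. ?r [S j, T j] * word_op \<rho> [S j, T j] \<xi> x)"
    by (subst sum.reindex) (auto simp: inj_on_def)
  also have "\<dots> = (\<Sum>j\<in>{1..d}. if j = j0 then \<xi> x else 0)"
  proof (rule sum.cong[OF refl])
    fix j assume j: "j \<in> {1..d}"
    show "?r [S j, T j] * word_op \<rho> [S j, T j] \<xi> x = (if j = j0 then \<xi> x else 0)"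
      using r1[OF j] wj[OF j] by simp
  qed
  also have "\<dots> = \<xi> x" using j0 by simp
  finally have "nc_eval \<rho> ?r \<xi> x = 0" using r0 by simp
  moreover have "finite (supp ?r)" using finite_subset[OF sub fin] .
  ultimately show ?thesis by simp
qed

lemma K: "P \<in> II A \<Longrightarrow> finite (supp P) \<and> (\<forall>\<xi> x. nc_eval \<rho> P \<xi> x = 0)"
proof (induction rule: ideal_gen.induct)
  case zero
  then show ?case by (simp add: supp_def nc_eval_def)
next
  case (base r)
  then show ?case using rels_cases[OF base] E1 E2 E3 by blast
next
  case (add P Q)
  let ?W = "supp P \<union> supp Q"
  have sub: "supp (\<lambda>w. P w + Q w) \<subseteq> ?W" by (auto simp: supp_def)
  have fin: "finite ?W" using add by simp
  have "nc_eval \<rho> (\<lambda>w. P w + Q w) \<xi> x = 0" for \<xi> x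
  proof -
    have "nc_eval \<rho> (\<lambda>w. P w + Q w) \<xi> x = (\<Sum>w\<in>?W. (P w + Q w) * word_op \<rho> w \<xi> x)"
      by (rule eval_superset[OF fin sub])
    also have "\<dots> = (\<Sum>w\<in>?W. P w * word_op \<rho> w \<xi> x) + (\<Sum>w\<in>?W. Q w * word_op \<rho> w \<xi> x)"
      by (simp add: distrib_right sum.distrib)
    also have "\<dots> = nc_eval \<rho> P \<xi> x + nc_eval \<rho> Q \<xi> x"
      using eval_superset[OF fin, of P] eval_superset[OF fin, of Q] by simp
    finally show ?thesis using add by simp
  qed
  then show ?case using finite_subset[OF sub fin] by simp
next
  case (lmult P w c)
  let ?W = "(\<lambda>u. w @ u) ` supp P"
  have fin: "finite ?W" using lmult by simp
  have z: "(\<lambda>n. \<Sum>u\<in>supp P. (c * P u) * word_op \<rho> u \<xi> n) = (\<lambda>_. 0)" for \<xi>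
  proof
    fix n
    have "(\<Sum>u\<in>supp P. (c * P u) * word_op \<rho> u \<xi> n) = c * (\<Sum>u\<in>supp P. P u * word_op \<rho> u \<xi> n)"
      by (simp add: sum_distrib_left mult.assoc)
    also have "\<dots> = c * nc_eval \<rho> P \<xi> n"
      using eval_superset[of "supp P" P \<rho> \<xi> n] lmult by simp
    finally have "(\<Sum>u\<in>supp P. (c * P u) * word_op \<rho> u \<xi> n) = c * nc_eval \<rho> P \<xi> n" .
    then show "(\<Sum>u\<in>supp P. (c * P u) * word_op \<rho> u \<xi> n) = 0" using lmult by simp
  qed
  have "nc_eval \<rho> (ncmult (mono c w) P) \<xi> x = 0" for \<xi> x
  proof -
    have "nc_eval \<rho> (ncmult (mono c w) P) \<xi> x = (\<Sum>v\<in>?W. ncmult (mono c w) P v * word_op \<rho> v \<xi> x)"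
      by (rule eval_superset[OF fin supp_lmult])
    also have "\<dots> = (\<Sum>u\<in>supp P. ncmult (mono c w) P (w @ u) * word_op \<rho> (w @ u) \<xi> x)"
      by (subst sum.reindex) (auto simp: inj_on_def)
    also have "\<dots> = (\<Sum>u\<in>supp P. (c * P u) * word_op \<rho> w (word_op \<rho> u \<xi>) x)"
      by (simp add: ncmult_mono_left word_op_append)
    also have "\<dots> = word_op \<rho> w (\<lambda>n. \<Sum>u\<in>supp P. (c * P u) * word_op \<rho> u \<xi> n) x"
      by (rule word_op_lin[symmetric])
    also have "\<dots> = 0" by (simp only: z word_op_zero)
    finally show ?thesis .
  qed
  then show ?case using finite_subset[OF supp_lmult fin] by simp
next
  case (rmult P w)
  let ?W = "(\<lambda>u. u @ w) ` supp P"
  have fin: "finite ?W" using rmult by simp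
  have "nc_eval \<rho> (ncmult P (mono 1 w)) \<xi> x = 0" for \<xi> x
  proof -
    have "nc_eval \<rho> (ncmult P (mono 1 w)) \<xi> x = (\<Sum>v\<in>?W. ncmult P (mono 1 w) v * word_op \<rho> v \<xi> x)"
      by (rule eval_superset[OF fin supp_rmult])
    also have "\<dots> = (\<Sum>u\<in>supp P. ncmult P (mono 1 w) (u @ w) * word_op \<rho> (u @ w) \<xi> x)"
      by (subst sum.reindex) (auto simp: inj_on_def)
    also have "\<dots> = (\<Sum>u\<in>supp P. P u * word_op \<rho> u (word_op \<rho> w \<xi>) x)"
      by (simp add: ncmult_mono_right_app word_op_append)
    also have "\<dots> = nc_eval \<rho> P (word_op \<rho> w \<xi>) x"
      using eval_superset[of "supp P" P \<rho> "word_op \<rho> w \<xi>" x] rmult by simp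
    also have "\<dots> = 0" using rmult by simp
    finally show ?thesis .
  qed
  then show ?case using finite_subset[OF supp_rmult fin] by simp
qed


lemma Pre: "set \<alpha> \<subseteq> idx A \<Longrightarrow> set \<beta> \<subseteq> idx A \<Longrightarrow> sw sig \<alpha> u = sw sig \<beta> v \<Longrightarrow>
  (\<exists>\<gamma>. \<beta> = \<alpha> @ \<gamma> \<and> u = sw sig \<gamma> v) \<or> (\<exists>\<gamma>. \<alpha> = \<beta> @ \<gamma> \<and> v = sw sig \<gamma> u)"
proof (induction \<alpha> arbitrary: \<beta>)
  case Nil
  then show ?case by simp
next
  case (Cons a \<alpha>)
  show ?case
  proof (cases \<beta>)
    case Nil
    then show ?thesis using Cons.prems by simp
  next
    case (Cons b \<beta>')
    have e: "sig a (sw sig \<alpha> u) = sig b (sw sig \<beta>' v)" using Cons.prems Cons by simp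
    have ab: "a = b" using sig_disj[OF _ _ e] Cons.prems Cons by simp
    then have "sw sig \<alpha> u = sw sig \<beta>' v" using e injD[OF sig_inj] Cons.prems by auto
    then have "(\<exists>\<gamma>. \<beta>' = \<alpha> @ \<gamma> \<and> u = sw sig \<gamma> v) \<or> (\<exists>\<gamma>. \<alpha> = \<beta>' @ \<gamma> \<and> v = sw sig \<gamma> u)"
      using Cons.IH Cons.prems Cons by simp
    then show ?thesis using ab Cons by auto
  qed
qed

end

fun isT :: "gen \<Rightarrow> bool" where "isT (S _) = False" | "isT (T _) = True"

lemma filter_isT0: "filter isT (map T b) = map T b"
  by (induction b) simp_all

lemma filter_isT: "length (filter isT (map S a @ map T b)) = length b"
  by (induction a) (simp_all add: filter_isT0)

lemma inj_T: "inj T" by (simp add: inj_def)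

lemma decomp_uniq: "map S a @ map T b = map S a' @ map T b' \<Longrightarrow> a = a' \<and> b = b'"
proof (induction a arbitrary: a')
  case Nil
  then show ?case by (cases a') (auto simp: inj_map_eq_map[OF inj_T])
next
  case (Cons x a)
  then show ?case by (cases a') auto
qed

context model begin

lemma Ind: assumes fin: "finite (supp Q)" and bas: "\<forall>v\<in>supp Q. basisw A v"
  and ev: "\<And>y x. nc_eval \<rho> Q (ind y) x = 0"
  shows "supp Q = {}"
proof (rule ccontr)
  assume "supp Q \<noteq> {}"
  then obtain v1 where "v1 \<in> supp Q" by blast
  then obtain v0 where v0: "v0 \<in> supp Q" and mn: "\<And>v. v \<in> supp Q \<Longrightarrow>
      length (filter isT v0) \<le> length (filter isT v)"
    using ex_has_least_nat[of "\<lambda>v. v \<in> supp Q" v1 "\<lambda>v. length (filter isT v)"] by blast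
  obtain \<mu>0 \<nu>0 where b0: "v0 = map S \<mu>0 @ map T (rev \<nu>0)" "set \<mu>0 \<subseteq> idx A" "set \<nu>0 \<subseteq> idx A"
    using bas v0 unfolding basisw_def by blast
  obtain z where z: "\<And>\<gamma> z'. set \<gamma> \<subseteq> idx A \<Longrightarrow> z = sw sig \<gamma> z' \<Longrightarrow> \<gamma> \<noteq> [] \<Longrightarrow>
      \<not> basisA A (\<mu>0 @ \<gamma>) (\<nu>0 @ \<gamma>)" using tp by blast
  define x where "x = sw sig \<mu>0 z"
  define y where "y = sw sig \<nu>0 z"
  have claim: "word_op \<rho> v (ind y) x = (if v = v0 then 1 else 0)" if v: "v \<in> supp Q" for v
  proof -
    obtain \<alpha> \<beta> where b: "v = map S \<alpha> @ map T (rev \<beta>)" "set \<alpha> \<subseteq> idx A" "set \<beta> \<subseteq> idx A"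
      "basisA A \<alpha> \<beta>"
      using bas v unfolding basisw_def by blast
    have wv: "word_op \<rho> v (ind y) x = (if \<exists>z'. x = sw sig \<alpha> z' \<and> y = sw sig \<beta> z' then 1 else 0)"
      using wB[OF b(2,3)] b(1) by simp
    show ?thesis
    proof (cases "v = v0")
      case True
      then have "\<alpha> = \<mu>0" "rev \<beta> = rev \<nu>0" using decomp_uniq b(1) b0(1) by metis+
      then show ?thesis using wv True x_def y_def by auto
    next
      case False
      have "\<not> (\<exists>z'. x = sw sig \<alpha> z' \<and> y = sw sig \<beta> z')"
      proof
        assume "\<exists>z'. x = sw sig \<alpha> z' \<and> y = sw sig \<beta> z'"
        then obtain z' where "x = sw sig \<alpha> z'" "y = sw sig \<beta> z'" by blast
        then have zx: "sw sig \<mu>0 z = sw sig \<alpha> z'" and zy: "sw sig \<nu>0 z = sw sig \<beta> z'"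
          using x_def y_def by simp_all
        have len: "length \<nu>0 \<le> length \<beta>" using mn[OF v] b(1) b0(1) by (simp add: filter_isT)
        obtain \<gamma> where g: "\<beta> = \<nu>0 @ \<gamma>" "z = sw sig \<gamma> z'"
        proof -
          from Pre[OF b0(3) b(3) zy] show ?thesis
          proof
            assume "\<exists>\<gamma>. \<beta> = \<nu>0 @ \<gamma> \<and> z = sw sig \<gamma> z'" then show ?thesis using that by blast
          next
            assume "\<exists>\<gamma>. \<nu>0 = \<beta> @ \<gamma> \<and> z' = sw sig \<gamma> z"
            then obtain \<gamma> where "\<nu>0 = \<beta> @ \<gamma>" "z' = sw sig \<gamma> z" by blast
            moreover then have "\<gamma> = []" using len by simp
            ultimately show ?thesis using that[of "[]"] by simp
          qed
        qed
        have sg: "set \<gamma> \<subseteq> idx A" using g(1) b(3) by simp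
        have "sw sig \<alpha> z' = sw sig (\<mu>0 @ \<gamma>) z'" using zx g(2) by (simp add: sw_append)
        from Pre[OF b(2) _ this] b0(2) sg
        have "(\<exists>\<delta>. \<mu>0 @ \<gamma> = \<alpha> @ \<delta> \<and> z' = sw sig \<delta> z') \<or> (\<exists>\<delta>. \<alpha> = (\<mu>0 @ \<gamma>) @ \<delta> \<and> z' = sw sig \<delta> z')"
          by simp
        then have a: "\<alpha> = \<mu>0 @ \<gamma>"
        proof
          assume "\<exists>\<delta>. \<mu>0 @ \<gamma> = \<alpha> @ \<delta> \<and> z' = sw sig \<delta> z'"
          then obtain \<delta> where d: "\<mu>0 @ \<gamma> = \<alpha> @ \<delta>" "z' = sw sig \<delta> z'" by blast
          have "set \<delta> \<subseteq> idx A" using d(1) b0(2) sg by (metis Un_subset_iff set_append)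
          then have "dep z' = dep z' + int (length \<delta>)" using dep_sw d(2) by metis
          then show ?thesis using d(1) by simp
        next
          assume "\<exists>\<delta>. \<alpha> = (\<mu>0 @ \<gamma>) @ \<delta> \<and> z' = sw sig \<delta> z'"
          then obtain \<delta> where d: "\<alpha> = (\<mu>0 @ \<gamma>) @ \<delta>" "z' = sw sig \<delta> z'" by blast
          have "set \<delta> \<subseteq> idx A" using d(1) b(2) by simp
          then have "dep z' = dep z' + int (length \<delta>)" using dep_sw d(2) by metis
          then show ?thesis using d(1) by simp
        qed
        show False
        proof (cases "\<gamma> = []")
          case True
          then show False using a g(1) b(1) b0(1) False by simp
        next
          case False
          then show False using z[OF sg g(2) False] a g(1) b(4) by simp
        qed
      qed
      then show ?thesis using wv False by simp
    qed
  qed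
  have "nc_eval \<rho> Q (ind y) x = (\<Sum>v\<in>supp Q. Q v * word_op \<rho> v (ind y) x)"
    by (rule eval_superset[OF fin]) simp
  also have "\<dots> = (\<Sum>v\<in>supp Q. if v = v0 then Q v else 0)"
    by (rule sum.cong) (simp_all add: claim)
  also have "\<dots> = Q v0" using v0 fin by simp
  finally have "Q v0 = 0" using ev by simp
  then show False using v0 by (simp add: supp_def)
qed

end



lemma reidx:
  fixes g :: "nat \<Rightarrow> real"
  assumes nn: "\<And>n. 0 \<le> g n" and sg: "summable g" and inj: "inj_on h B"
  shows "summable (\<lambda>n. if n \<in> B then g (h n) else 0) \<and> (\<Sum>n. if n \<in> B then g (h n) else 0) \<le> suminf g"
proof -
  let ?F = "\<lambda>n. if n \<in> B then g (h n) else 0"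
  have nnF: "\<And>n. 0 \<le> ?F n" using nn by simp
  have part: "sum ?F {..<N} \<le> suminf g" for N
  proof -
    have "sum ?F {..<N} = sum (\<lambda>n. g (h n)) ({..<N} \<inter> B)"
      by (simp add: sum.inter_restrict)
    also have "\<dots> = sum g (h ` ({..<N} \<inter> B))"
      by (rule sum.reindex[symmetric, unfolded comp_def]) (rule inj_on_subset[OF inj], blast)
    also have "\<dots> \<le> suminf g" by (rule sum_le_suminf[OF sg]) (simp_all add: nn)
    finally show ?thesis .
  qed
  have s: "summable ?F" by (rule summableI_nonneg_bounded[OF nnF part])
  show ?thesis using s suminf_le_const[OF s part] by simp
qed

lemma bounded_gen:
  assumes inj: "inj_on h B" and op: "\<And>\<xi> n. Op \<xi> n = (if n \<in> B then \<xi> (h n) else 0)" and p: "1 \<le> p"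
  shows "bounded_op p Op"
proof -
  have key: "summable (\<lambda>n. norm (Op \<xi> n) powr p) \<and> (\<Sum>n. norm (Op \<xi> n) powr p) \<le> (\<Sum>n. norm (\<xi> n) powr p)"
    if "\<xi> \<in> lp p" for \<xi>
  proof -
    have e: "(\<lambda>n. norm (Op \<xi> n) powr p) = (\<lambda>n. if n \<in> B then norm (\<xi> (h n)) powr p else 0)"
      by (rule ext) (simp add: op)
    show ?thesis unfolding e
      by (rule reidx[OF _ _ inj, of "\<lambda>n. norm (\<xi> n) powr p"]) (use that in \<open>simp_all add: lp_def\<close>)
  qed
  have lin: "Op (\<lambda>n. c * \<xi> n + \<eta> n) = (\<lambda>n. c * Op \<xi> n + Op \<eta> n)" for c \<xi> \<eta>
    by (rule ext) (simp add: op)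
  have nrm: "lp_norm p (Op \<xi>) \<le> 1 * lp_norm p \<xi>" if "\<xi> \<in> lp p" for \<xi>
  proof -
    have "0 \<le> (\<Sum>n. norm (Op \<xi> n) powr p)"
      using key[OF that] by (intro suminf_nonneg) auto
    then show ?thesis unfolding lp_norm_def using key[OF that] p
      by (simp add: powr_mono2)
  qed
  have "\<exists>C. \<forall>\<xi>\<in>lp p. lp_norm p (Op \<xi>) \<le> C * lp_norm p \<xi>" using nrm by blast
  then show ?thesis unfolding bounded_op_def using key lin by (auto simp: lp_def)
qed

lemma spatial_inj:
  fixes f :: "nat \<Rightarrow> nat"
  assumes inj: "inj f"
  shows "spatial_pair p (\<lambda>\<xi> n. if n \<in> range f then \<xi> (inv f n) else 0) (\<lambda>\<xi> n. \<xi> (f n))"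
proof -
  let ?St = "image f"
  let ?F = "range f"
  let ?iSt = "inv_into (Pow UNIV) ?St"
  have injSt: "inj_on ?St (Pow UNIV)" using inj_on_image_Pow[OF inj] .
  have iSt1: "?iSt {f x} = {x}" for x
    by (rule inv_into_f_eq[OF injSt]) auto
  have iSt1': "inv (image f) {f x} = {x}" for x using iSt1[of x] by simp
  have subP: "Pow ?F \<subseteq> ?St ` Pow UNIV"
  proof
    fix X assume "X \<in> Pow ?F"
    then have "X = f ` (f -` X)" by auto
    then show "X \<in> ?St ` Pow UNIV" by blast
  qed
  have injiSt: "inj_on ?iSt (Pow ?F)" by (rule inj_on_inv_into[OF subP])
  have iiSt: "inv_into (Pow ?F) ?iSt {x} = {f x}" for x
    by (rule inv_into_f_eq[OF injiSt]) (auto simp: iSt1')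
  have tb: "set_transf_bij UNIV ?F ?St"
    unfolding set_transf_bij_def
  proof (intro conjI allI impI)
    show "bij_betw ?St (Pow UNIV) (Pow ?F)"
      unfolding bij_betw_def using injSt image_Pow_surj[of f UNIV ?F] by simp
  next
    fix A :: "nat set" show "f ` (UNIV - A) = range f - f ` A" by (rule image_set_diff[OF inj])
  next
    fix A B :: "nat set" show "f ` (A \<inter> B) = f ` A \<inter> f ` B" by (rule image_Int[OF inj])
  next
    fix Af :: "nat \<Rightarrow> nat set" show "f ` (\<Union>n. Af n) = (\<Union>n. f ` Af n)" by (rule image_UN)
  qed
  have ss: "spatial_system UNIV ?F ?St (\<lambda>_. 1)" unfolding spatial_system_def using tb by simp
  have rn1: "rn_deriv UNIV ?St (f x) = 1" for x
    unfolding rn_deriv_def by (simp add: iSt1')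
  have pf1: "pushfwd UNIV ?St \<phi> (f x) = \<phi> x" for x and \<phi> :: "nat \<Rightarrow> complex"
  proof -
    have "(THE x'. x' \<in> UNIV \<and> f ` {x'} = {f x}) = x"
      by (rule the_equality) (auto dest: injD[OF inj])
    then show ?thesis unfolding pushfwd_def by simp
  qed
  have s_eq: "(\<lambda>n. if n \<in> range f then \<xi> (inv f n) else 0) = spatial_pi p UNIV ?F ?St (\<lambda>_. 1) \<xi>" for \<xi>
  proof
    fix n show "(if n \<in> range f then \<xi> (inv f n) else 0) = spatial_pi p UNIV ?F ?St (\<lambda>_. 1) \<xi> n"
    proof (cases "n \<in> range f")
      case True
      then obtain x where x: "n = f x" by blast
      show ?thesis using x inj unfolding spatial_pi_def by (simp add: rn1 pf1)
    next
      case False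
      then show ?thesis unfolding spatial_pi_def by simp
    qed
  qed
  have rn2: "rn_deriv ?F ?iSt x = 1" for x
    unfolding rn_deriv_def iiSt by simp
  have pf2: "pushfwd ?F ?iSt \<phi> x = \<phi> (f x)" for x and \<phi> :: "nat \<Rightarrow> 'a"
  proof -
    have "(THE y. y \<in> ?F \<and> ?iSt {y} = {x}) = f x"
    proof (rule the_equality)
      show "f x \<in> ?F \<and> ?iSt {f x} = {x}" using iSt1 by simp
    next
      fix y assume y: "y \<in> ?F \<and> ?iSt {y} = {x}"
      then obtain y' where "y = f y'" by blast
      then show "y = f x" using y iSt1 by simp
    qed
    then show ?thesis unfolding pushfwd_def by simp
  qed
  have rn2': "rn_deriv ?F (inv (image f)) x = 1" for x using rn2[of x] by simp
  have pf2': "pushfwd ?F (inv (image f)) \<phi> x = \<phi> (f x)" for x and \<phi> :: "nat \<Rightarrow> 'a"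
    using pf2[of \<phi> x] by simp
  have t_eq: "(\<lambda>n. \<xi> (f n)) = spatial_pi p ?F UNIV ?iSt (\<lambda>x. inverse (pushfwd ?F ?iSt (\<lambda>_. 1) x)) \<xi>" for \<xi>
    by (rule ext) (simp add: spatial_pi_def rn2' pf2')
  show ?thesis unfolding spatial_pair_def
    using ss s_eq t_eq by blast
qed

context model begin

lemma bS: "j \<in> idx A \<Longrightarrow> 1 \<le> p \<Longrightarrow> bounded_op p (\<rho> (S j))"
  by (rule bounded_gen[of "inv (sig j)" "range (sig j)"]) (simp_all add: inj_on_inv_into)

lemma bT: "j \<in> idx A \<Longrightarrow> 1 \<le> p \<Longrightarrow> bounded_op p (\<rho> (T j))"
  by (rule bounded_gen[of "sig j" UNIV]) (simp_all add: sig_inj)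

lemma spS: "j \<in> idx A \<Longrightarrow> spatial_pair p (\<rho> (S j)) (\<rho> (T j))"
proof -
  assume j: "j \<in> idx A"
  have "\<rho> (S j) = (\<lambda>\<xi> n. if n \<in> range (sig j) then \<xi> (inv (sig j) n) else 0)" by (intro ext) simp
  moreover have "\<rho> (T j) = (\<lambda>\<xi> n. \<xi> (sig j n))" by (intro ext) simp
  ultimately show ?thesis using spatial_inj[OF sig_inj[OF j]] by simp
qed

lemma free: "free_rep p A \<rho>"
  unfolding free_rep_def
proof (intro exI[of _ "\<lambda>m. {x. dep x = m}"] conjI ballI allI impI)
  show "(\<Union>m. {x. dep x = m}) = UNIV" by auto
next
  fix m m' :: int assume "m \<noteq> m'" then show "{x. dep x = m} \<inter> {x. dep x = m'} = {}" by auto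
next
  fix j m and \<xi> :: "nat \<Rightarrow> complex" and x assume j: "j \<in> idx A" and sup: "\<forall>x. x \<notin> {x. dep x = m} \<longrightarrow> \<xi> x = 0"
    and x: "x \<notin> {x. dep x = m + 1}"
  show "\<rho> (S j) \<xi> x = 0"
  proof (cases "x \<in> range (sig j)")
    case True
    then obtain y where y: "x = sig j y" by blast
    then have "dep y \<noteq> m" using x dep_sig[OF j] by simp
    then show ?thesis using y sup j by simp
  qed simp
next
  fix j m and \<xi> :: "nat \<Rightarrow> complex" and x assume j: "j \<in> idx A" and sup: "\<forall>x. x \<notin> {x. dep x = m} \<longrightarrow> \<xi> x = 0"
    and x: "x \<notin> {x. dep x = m - 1}"
  have "dep (sig j x) \<noteq> m" using x dep_sig[OF j] by auto
  then show "\<rho> (T j) \<xi> x = 0" using sup by simp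
qed

lemma ind_lp: "ind y \<in> lp p"
  unfolding lp_def
  by (simp, rule summable_finite[of "{y}"]) (simp_all add: ind_def)

lemma eval_diff: "finite (supp P) \<Longrightarrow> finite (supp Q) \<Longrightarrow>
  nc_eval \<rho> (\<lambda>v. P v - Q v) \<xi> x = nc_eval \<rho> P \<xi> x - nc_eval \<rho> Q \<xi> x"
proof -
  assume fP: "finite (supp P)" and fQ: "finite (supp Q)"
  let ?W = "supp P \<union> supp Q"
  have fin: "finite ?W" using fP fQ by simp
  have sub: "supp (\<lambda>v. P v - Q v) \<subseteq> ?W" by (auto simp: supp_def)
  show ?thesis
    using eval_superset[OF fin sub, of \<rho> \<xi> x] eval_superset[OF fin, of P \<rho> \<xi> x]
      eval_superset[OF fin, of Q \<rho> \<xi> x]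
    by (simp add: left_diff_distrib sum_subtractf)
qed

theorem main: assumes p: "1 \<le> p"
  shows "\<exists>\<rho>. is_rep p A \<rho> \<and> injective_rep p A \<rho> \<and> free_rep p A \<rho> \<and> spatial_rep p A \<rho>"
proof (intro exI conjI)
  show "is_rep p A \<rho>"
    unfolding is_rep_def
  proof (intro conjI ballI)
    fix g assume "g \<in> gens A"
    then show "bounded_op p (\<rho> g)" using bS bT p by (auto simp: gens_def)
  next
    fix r \<xi> assume r: "r \<in> rels A" and "\<xi> \<in> lp p"
    from r have "r \<in> II A" by (rule ideal_gen.base)
    then show "nc_eval \<rho> r \<xi> = (\<lambda>_. 0)" using K by auto
  qed
  show "injective_rep p A \<rho>"
    unfolding injective_rep_def
  proof (intro allI impI)
    fix P assume P: "ncpoly_over (gens A) P" and z: "\<forall>\<xi>\<in>lp p. nc_eval \<rho> P \<xi> = (\<lambda>_. 0)"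
    obtain Q where Q: "finite (supp Q)" "\<forall>v\<in>supp Q. basisw A v" "(\<lambda>v. P v - Q v) \<in> II A"
      using nf_poly[OF P] by blast
    have fP: "finite (supp P)" using P by (simp add: ncpoly_over_def supp_def)
    have KK: "nc_eval \<rho> (\<lambda>v. P v - Q v) \<xi> x = 0" for \<xi> x using K[OF Q(3)] by blast
    have "nc_eval \<rho> Q (ind y) x = 0" for y x
      using eval_diff[OF fP Q(1), of "ind y" x] KK[of "ind y" x] z ind_lp[of y] by (simp add: fun_eq_iff)
    then have "supp Q = {}" using Ind[OF Q(1,2)] by blast
    then have "Q = (\<lambda>_. 0)" by (auto simp: supp_def)
    then show "P \<in> II A" using Q(3) by simp
  qed
  show "free_rep p A \<rho>" by (rule free)
  show "spatial_rep p A \<rho>" unfolding spatial_rep_def using spS by blast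
qed

end



definition enc :: "int \<times> nat \<Rightarrow> nat" where "enc a = prod_encode (int_encode (fst a), snd a)"
definition dec :: "nat \<Rightarrow> int \<times> nat" where "dec x = (int_decode (fst (prod_decode x)), snd (prod_decode x))"

lemma dec_enc[simp]: "dec (enc a) = a" by (simp add: enc_def dec_def)
lemma enc_dec[simp]: "enc (dec x) = x" by (simp add: enc_def dec_def)
lemma enc_inj[simp]: "enc a = enc b \<longleftrightarrow> a = b" by (metis dec_enc)

definition gsig :: "(nat \<Rightarrow> nat \<Rightarrow> nat) \<Rightarrow> nat \<Rightarrow> nat \<Rightarrow> nat" where
  "gsig f j x = enc (fst (dec x) + 1, f j (snd (dec x)))"

definition gdep :: "nat \<Rightarrow> int" where "gdep x = fst (dec x)"

lemma gsig_inj: "inj (f j) \<Longrightarrow> inj (gsig f j)"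
  unfolding inj_def gsig_def by (metis enc_dec prod.collapse add_right_cancel enc_inj prod.inject)

lemma gsig_disj: "(\<And>n n'. f j n = f k n' \<Longrightarrow> j = k) \<Longrightarrow> gsig f j x = gsig f k y \<Longrightarrow> j = k"
  unfolding gsig_def by (simp, blast)

lemma gdep_sig: "gdep (gsig f j x) = gdep x + 1"
  unfolding gsig_def gdep_def by simp

lemma dig: "a < (d::nat) \<Longrightarrow> b < d \<Longrightarrow> d * n + a = d * n' + b \<Longrightarrow> n = n' \<and> a = b"
proof -
  assume a: "a < d" "b < d" "d * n + a = d * n' + b"
  have "(d * n + a) div d = n" "(d * n + a) mod d = a" using a(1) by simp_all
  moreover have "(d * n' + b) div d = n'" "(d * n' + b) mod d = b" using a(2) by simp_all
  ultimately show ?thesis using a(3) by metis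
qed

lemma sw_fst_zero: "(\<And>n. f j n \<noteq> 0) \<Longrightarrow> gsig f j x \<noteq> enc (m, 0)"
  unfolding gsig_def by simp

lemma model_Cd: "1 \<le> d \<Longrightarrow> model (Cd d) (gsig (\<lambda>j n. d * n + j)) gdep"
proof unfold_locales
  assume d: "1 \<le> d"
  fix j assume j: "j \<in> idx (Cd d)"
  show "inj (gsig (\<lambda>j n. d * n + j) j)" using d by (intro gsig_inj) (simp add: inj_def)
next
  fix j k x y assume j: "j \<in> idx (Cd d)" "k \<in> idx (Cd d)" and e: "gsig (\<lambda>j n. d * n + j) j x = gsig (\<lambda>j n. d * n + j) k y"
  show "j = k"
  proof (rule gsig_disj[OF _ e])
    fix n n' assume "d * n + j = d * n' + k"
    then have "d * n + (j - 1) = d * n' + (k - 1)" using j by auto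
    then show "j = k" using dig[of "j - 1" d "k - 1" n n'] j by auto
  qed
next
  fix j x show "gdep (gsig (\<lambda>j n. d * n + j) j x) = gdep x + 1" by (rule gdep_sig)
next
  fix d' x assume "Cd d = Ld d'" then show "\<exists>j\<in>{1..d'}. x \<in> range (gsig (\<lambda>j n. d * n + j) j)" by simp
next
  show "\<exists>z. \<forall>\<gamma> z'. set \<gamma> \<subseteq> idx (Cd d) \<longrightarrow> z = sw (gsig (\<lambda>j n. d * n + j)) \<gamma> z' \<longrightarrow> \<gamma> \<noteq> [] \<longrightarrow>
              (\<forall>\<mu> \<nu>. \<not> basisA (Cd d) (\<mu> @ \<gamma>) (\<nu> @ \<gamma>))"
  proof (intro exI[of _ "enc (0, 0)"] allI impI)
    fix \<gamma> z' \<mu> \<nu> assume s: "set \<gamma> \<subseteq> idx (Cd d)" and e: "enc (0, 0) = sw (gsig (\<lambda>j n. d * n + j)) \<gamma> z'"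
      and ne: "\<gamma> \<noteq> []"
    then obtain a \<gamma>' where g: "\<gamma> = a # \<gamma>'" by (cases \<gamma>) auto
    then have "a \<ge> 1" using s by auto
    then have "gsig (\<lambda>j n. d * n + j) a (sw (gsig (\<lambda>j n. d * n + j)) \<gamma>' z') \<noteq> enc (0, 0)"
      by (intro sw_fst_zero) simp
    then show "\<not> basisA (Cd d) (\<mu> @ \<gamma>) (\<nu> @ \<gamma>)"
      using e g by simp
  qed
qed

lemma model_Linf: "model Linf (gsig (\<lambda>j n. Suc (prod_encode (j, n)))) gdep"
proof unfold_locales
  fix j show "inj (gsig (\<lambda>j n. Suc (prod_encode (j, n))) j)"
    by (intro gsig_inj) (simp add: inj_def prod_encode_eq)
next
  fix j k x y assume e: "gsig (\<lambda>j n. Suc (prod_encode (j, n))) j x = gsig (\<lambda>j n. Suc (prod_encode (j, n))) k y"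
  show "j = k" by (rule gsig_disj[OF _ e]) (simp add: prod_encode_eq)
next
  fix j x show "gdep (gsig (\<lambda>j n. Suc (prod_encode (j, n))) j x) = gdep x + 1" by (rule gdep_sig)
next
  fix d' x assume "Linf = Ld d'" then show "\<exists>j\<in>{1..d'}. x \<in> range (gsig (\<lambda>j n. Suc (prod_encode (j, n))) j)" by simp
next
  show "\<exists>z. \<forall>\<gamma> z'. set \<gamma> \<subseteq> idx Linf \<longrightarrow> z = sw (gsig (\<lambda>j n. Suc (prod_encode (j, n)))) \<gamma> z' \<longrightarrow> \<gamma> \<noteq> [] \<longrightarrow>
              (\<forall>\<mu> \<nu>. \<not> basisA Linf (\<mu> @ \<gamma>) (\<nu> @ \<gamma>))"
  proof (intro exI[of _ "enc (0, 0)"] allI impI)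
    fix \<gamma> z' \<mu> \<nu> assume e: "enc (0, 0) = sw (gsig (\<lambda>j n. Suc (prod_encode (j, n)))) \<gamma> z'"
      and ne: "\<gamma> \<noteq> []"
    then obtain a \<gamma>' where g: "\<gamma> = a # \<gamma>'" by (cases \<gamma>) auto
    have "gsig (\<lambda>j n. Suc (prod_encode (j, n))) a (sw (gsig (\<lambda>j n. Suc (prod_encode (j, n)))) \<gamma>' z') \<noteq> enc (0, 0)"
      by (intro sw_fst_zero) simp
    then show "\<not> basisA Linf (\<mu> @ \<gamma>) (\<nu> @ \<gamma>)"
      using e g by simp
  qed
qed

lemma Ld_tp: "1 \<le> d \<Longrightarrow> set \<gamma> \<subseteq> {1..d} \<Longrightarrow> enc (m, 0) = sw (gsig (\<lambda>j n. d * n + (j - 1))) \<gamma> z' \<Longrightarrow>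
   \<forall>j\<in>set \<gamma>. j = 1"
proof (induction \<gamma> arbitrary: m)
  case Nil
  then show ?case by simp
next
  case (Cons a \<gamma>)
  define w where "w = sw (gsig (\<lambda>j n. d * n + (j - 1))) \<gamma> z'"
  have "enc (m, 0) = gsig (\<lambda>j n. d * n + (j - 1)) a w" using Cons.prems unfolding w_def by simp
  then have "enc (m, 0) = enc (fst (dec w) + 1, d * snd (dec w) + (a - 1))"
    unfolding gsig_def by simp
  then have e: "m = fst (dec w) + 1" "0 = d * snd (dec w) + (a - 1)" by simp_all
  then have a1: "a = 1" using Cons.prems by auto
  have "snd (dec w) = 0" using e Cons.prems by simp
  then have "dec w = (m - 1, 0)" using e(1) by (metis add_diff_cancel_right' prod.collapse)
  then have "enc (m - 1, 0) = w" by (metis enc_dec)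
  then have "enc (m - 1, 0) = sw (gsig (\<lambda>j n. d * n + (j - 1))) \<gamma> z'" unfolding w_def .
  then have "\<forall>j\<in>set \<gamma>. j = 1" using Cons.IH[of "m - 1"] Cons.prems by simp
  then show ?case using a1 by simp
qed

lemma model_Ld: "1 \<le> d \<Longrightarrow> model (Ld d) (gsig (\<lambda>j n. d * n + (j - 1))) gdep"
proof unfold_locales
  assume d: "1 \<le> d"
  fix j assume j: "j \<in> idx (Ld d)"
  show "inj (gsig (\<lambda>j n. d * n + (j - 1)) j)" using d by (intro gsig_inj) (simp add: inj_def)
next
  fix j k x y assume j: "j \<in> idx (Ld d)" "k \<in> idx (Ld d)" and e: "gsig (\<lambda>j n. d * n + (j - 1)) j x = gsig (\<lambda>j n. d * n + (j - 1)) k y"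
  show "j = k"
  proof (rule gsig_disj[OF _ e])
    fix n n' assume "d * n + (j - 1) = d * n' + (k - 1)"
    then show "j = k" using dig[of "j - 1" d "k - 1" n n'] j by auto
  qed
next
  fix j x show "gdep (gsig (\<lambda>j n. d * n + (j - 1)) j x) = gdep x + 1" by (rule gdep_sig)
next
  fix d' x assume dd: "Ld d = Ld d'" and d: "1 \<le> d"
  obtain m n where x: "dec x = (m, n)" by (cases "dec x")
  have "n = d * (n div d) + (n mod d + 1 - 1)" by simp
  then have "gsig (\<lambda>j n. d * n + (j - 1)) (n mod d + 1) (enc (m - 1, n div d)) = x"
    unfolding gsig_def by (simp add: x[symmetric])
  moreover have "n mod d + 1 \<in> {1..d}" using d by (simp add: Suc_le_eq)
  ultimately show "\<exists>j\<in>{1..d'}. x \<in> range (gsig (\<lambda>j n. d * n + (j - 1)) j)" using dd by (metis rangeI alg.inject(1))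
next
  assume d: "1 \<le> d"
  show "\<exists>z. \<forall>\<gamma> z'. set \<gamma> \<subseteq> idx (Ld d) \<longrightarrow> z = sw (gsig (\<lambda>j n. d * n + (j - 1))) \<gamma> z' \<longrightarrow> \<gamma> \<noteq> [] \<longrightarrow>
              (\<forall>\<mu> \<nu>. \<not> basisA (Ld d) (\<mu> @ \<gamma>) (\<nu> @ \<gamma>))"
  proof (intro exI[of _ "enc (0, 0)"] allI impI)
    fix \<gamma> z' \<mu> \<nu> assume s: "set \<gamma> \<subseteq> idx (Ld d)" and e: "enc (0, 0) = sw (gsig (\<lambda>j n. d * n + (j - 1))) \<gamma> z'"
      and ne: "\<gamma> \<noteq> []"
    have "\<forall>j\<in>set \<gamma>. j = 1" using Ld_tp[OF d _ e] s by simp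
    then have "last \<gamma> = 1" using ne by simp
    then show "\<not> basisA (Ld d) (\<mu> @ \<gamma>) (\<nu> @ \<gamma>)" using ne unfolding basisA_def by simp
  qed
qed

theorem corollary8p4:
  fixes A :: alg and p :: real
  assumes "valid_alg A" and "1 \<le> p" and "p \<noteq> 2"
  shows "\<exists>\<rho>. is_rep p A \<rho> \<and> injective_rep p A \<rho> \<and> free_rep p A \<rho> \<and> spatial_rep p A \<rho>"
proof (cases A)
  case (Ld d)
  then have "1 \<le> d" using assms(1) by (simp add: valid_alg_def)
  then show ?thesis using model.main[OF model_Ld assms(2)] Ld by simp
next
  case (Cd d)
  then have "1 \<le> d" using assms(1) by (simp add: valid_alg_def)
  then show ?thesis using model.main[OF model_Cd assms(2)] Cd by simp
next
  case Linf
  then show ?thesis using model.main[OF model_Linf assms(2)] by simp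
qed


end
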